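(* Let $m\ge1$, $q=2^m$, let $n$ be even, let $L$ be a $2$-linear polynomial over $\mathbb F_{q^n}$ such that $\mathrm{Tr}(x^{q+1})+L(x)$ is a permutation polynomial of $\mathbb F_{q^n}$, and let $\lambda$ be a $2$-linear polynomial over $\mathbb F_{q^n}$ that permutes $\mathbb F_{q^n}$. If $\lambda(\mathbb F_{q^2})=\mathbb F_{q^2}$, then both $\mathrm{Tr}(x^{q+1})+\lambda(x)$ and $\mathrm{Tr}(x^{q+1})+L(\lambda(x))$ are permutation polynomials of $\mathbb F_{q^n}$. If $\lambda(\mathbb F_q)=\mathbb F_q$, then $\mathrm{Tr}(x^{q+1})+\lambda(L(x))$ is a permutation polynomial of $\mathbb F_{q^n}$.
   Context: $\mathrm{Tr}$ denotes the trace map of $\mathbb F_{q^n}$ over $\mathbb F_q$. A $2$-linear polynomial over $\mathbb F_{q^n}$ has the form $\sum_{j=0}^{mn-1}a_jx^{2^j}$ with $a_j\in\mathbb F_{q^n}$. Polynomials are regarded as maps on $\mathbb F_{q^n}$. *)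

theory Defs
  imports Main
begin

definition Tr :: "nat \<Rightarrow> nat \<Rightarrow> 'a::field \<Rightarrow> 'a" where
  "Tr q n y = (\<Sum>i<n. y ^ (q ^ i))"

definition is_2lin :: "nat \<Rightarrow> ('a::field \<Rightarrow> 'a) \<Rightarrow> bool" where
  "is_2lin N f \<longleftrightarrow> (\<exists>a :: nat \<Rightarrow> 'a. \<forall>x. f x = (\<Sum>j<N. a j * x ^ (2 ^ j)))"

text \<open>The subfield F_{q^k} of the ambient field, as the set of roots of x^(q^k) - x.\<close>
definition subF :: "nat \<Rightarrow> nat \<Rightarrow> 'a::field set" where
  "subF q k = {x. x ^ (q ^ k) = x}"

end

theory Submission imports Defs "HOL-Computational_Algebra.Polynomial" begin

lemma fermat1:
  fixes x :: "'a::{field,finite}"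
  assumes "x \<noteq> 0"
  shows "x ^ (card (UNIV::'a set) - 1) = 1"
proof -
  define U where "U = UNIV - {0::'a}"
  have fin: "finite U" by simp
  have cU: "card U = card (UNIV::'a set) - 1"
    unfolding U_def by (simp add: card_Diff_singleton)
  have bij: "bij_betw ((*) x) U U"
    unfolding bij_betw_def
  proof
    show "inj_on ((*) x) U" using assms by (auto simp: inj_on_def)
    show "(*) x ` U = U"
    proof
      show "(*) x ` U \<subseteq> U" using assms by (auto simp: U_def)
      show "U \<subseteq> (*) x ` U"
      proof
        fix y assume "y \<in> U"
        then have "y = x * (y / x)" "y / x \<in> U" using assms by (auto simp: U_def)
        then show "y \<in> (*) x ` U" by blast
      qed
    qed
  qed
  have "prod (\<lambda>y. x * y) U = prod id U"
    using prod.reindex_bij_betw[OF bij, of id] by simp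
  moreover have "prod (\<lambda>y. x * y) U = x ^ card U * prod id U"
    by (simp add: prod.distrib)
  moreover have "prod id U \<noteq> 0" using fin by (auto simp: U_def)
  ultimately have "x ^ card U = 1" by simp
  then show ?thesis using cU by simp
qed

lemma fermat:
  fixes x :: "'a::{field,finite}"
  shows "x ^ card (UNIV::'a set) = x"
proof (cases "x = 0")
  case True
  have "card (UNIV::'a set) > 0" by (simp add: finite_UNIV_card_ge_0)
  then show ?thesis using True by simp
next
  case False
  have "card (UNIV::'a set) > 0" by (simp add: finite_UNIV_card_ge_0)
  then have "card (UNIV::'a set) = Suc (card (UNIV::'a set) - 1)" by simp
  then have "x ^ card (UNIV::'a set) = x * x ^ (card (UNIV::'a set) - 1)"
    by (metis power_Suc)
  then show ?thesis using fermat1[OF False] by simp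
qed

lemma card_ge2: "card (UNIV::'a::{field,finite} set) \<ge> 2"
proof -
  have "card {0::'a, 1} \<le> card (UNIV::'a set)" by (rule card_mono) auto
  then show ?thesis by simp
qed

lemma char2:
  assumes "card (UNIV::'a::{field,finite} set) = (2::nat) ^ k"
  shows "(2::'a) = 0"
proof -
  have "k \<noteq> 0" using card_ge2[where 'a='a] assms by (cases k) auto
  then have "odd (card (UNIV::'a set) - 1)" using assms by (cases k) auto
  then have "(-1::'a) ^ (card (UNIV::'a set) - 1) = -1" by simp
  moreover have "(-1::'a) ^ (card (UNIV::'a set) - 1) = 1" by (rule fermat1) simp
  ultimately have "(-1::'a) = 1" by simp
  then show ?thesis by (metis add.right_inverse one_add_one)
qed

context
  fixes m n :: nat
  assumes two: "(2::'a::{field,finite}) = 0"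
  and cardF: "card (UNIV::'a set) = (2^m)^n"
  and ev: "even n" and m1: "m \<ge> 1"
begin

lemma ferm: "(x::'a) ^ ((2^m)^n) = x" using fermat[of x] cardF by simp

lemma n2: "n \<ge> 2"
proof -
  have "n \<noteq> 0" using card_ge2[where 'a='a] cardF by (cases n) auto
  then show ?thesis using ev by presburger
qed

lemma plus_self[simp]: "(x::'a) + x = 0"
  by (metis mult_2 two mult_zero_left)

lemma sum0_iff: "(x::'a) + y = 0 \<longleftrightarrow> x = y"
  by (metis add.commute add_eq_0_iff2 add_right_cancel plus_self)

lemma frob2: "((x::'a) + y) ^ (2^k) = x ^ (2^k) + y ^ (2^k)"
proof (induction k)
  case 0 then show ?case by simp
next
  case (Suc k)
  have "(x + y) ^ (2 ^ Suc k) = ((x+y)^(2^k))^2" by (simp add: power_mult[symmetric] mult.commute)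
  also have "\<dots> = (x ^ (2^k) + y ^ (2^k))^2" using Suc by simp
  also have "\<dots> = (x ^ (2^k))^2 + (y ^ (2^k))^2 + 2 * x ^ (2^k) * y ^ (2^k)"
    by (simp add: power2_eq_square algebra_simps)
  also have "\<dots> = x ^ (2 ^ Suc k) + y ^ (2 ^ Suc k)"
    by (simp add: two power_mult[symmetric] mult.commute)
  finally show ?case .
qed

lemma frobq: "((x::'a) + y) ^ ((2^m)^i) = x ^ ((2^m)^i) + y ^ ((2^m)^i)"
  using frob2[of x y "m*i"] by (simp add: power_mult)

lemma frob_sum: "finite A \<Longrightarrow> (\<Sum>i\<in>A. (f i::'a)) ^ ((2^m)^k) = (\<Sum>i\<in>A. (f i) ^ ((2^m)^k))"
proof (induction A rule: finite_induct)
  case empty then show ?case by simp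
next
  case (insert a A) then show ?case by (simp add: frobq)
qed

lemma shift: "(\<Sum>i<n. (y::'a) ^ ((2^m) ^ Suc i)) = (\<Sum>i<n. y ^ ((2^m) ^ i))"
proof -
  have "(\<Sum>i<Suc n. y ^ ((2^m) ^ i)) = y + (\<Sum>i<n. y ^ ((2^m) ^ Suc i))"
    by (subst sum.lessThan_Suc_shift) simp
  moreover have "(\<Sum>i<Suc n. y ^ ((2^m) ^ i)) = (\<Sum>i<n. y ^ ((2^m) ^ i)) + y"
    using ferm[of y] by simp
  ultimately show ?thesis by (simp add: add.commute)
qed

lemma Tr_add: "Tr (2^m) n ((x::'a) + y) = Tr (2^m) n x + Tr (2^m) n y"
  unfolding Tr_def by (simp add: frobq sum.distrib)

lemma Tr_frob: "Tr (2^m) n ((y::'a) ^ (2^m)) = Tr (2^m) n y"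
proof -
  have "\<And>i. (y ^ (2^m)) ^ ((2^m)^i) = y ^ ((2^m) ^ Suc i)"
    by (simp add: power_mult[symmetric])
  then show ?thesis unfolding Tr_def using shift by simp
qed

lemma Tr_in: "Tr (2^m) n (y::'a) \<in> subF (2^m) 1"
proof -
  have "\<And>i. (y ^ ((2^m)^i)) ^ (2^m) = y ^ ((2^m) ^ Suc i)"
    by (simp add: power_mult[symmetric] mult.commute)
  then have "Tr (2^m) n y ^ (2^m) = Tr (2^m) n y"
    unfolding Tr_def using frob_sum[of "{..<n}" "\<lambda>i. y ^ ((2^m)^i)" 1] shift by simp
  then show ?thesis by (simp add: subF_def)
qed

lemma subF1_pow: "t \<in> subF (2^m) 1 \<Longrightarrow> (t::'a) ^ ((2^m)^i) = t"
proof (induction i)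
  case 0 then show ?case by simp
next
  case (Suc i)
  have "t ^ ((2^m)^Suc i) = (t ^ ((2^m)^i)) ^ (2^m)" by (simp add: power_mult[symmetric] mult.commute)
  then show ?case using Suc by (simp add: subF_def)
qed

lemma Tr_scal: "t \<in> subF (2^m) 1 \<Longrightarrow> Tr (2^m) n (t * (y::'a)) = t * Tr (2^m) n y"
  unfolding Tr_def by (simp add: power_mult_distrib subF1_pow sum_distrib_left)

lemma Tr_zero[simp]: "Tr (2^m) n (0::'a) = 0"
  unfolding Tr_def by (intro sum.neutral) (simp add: zero_power)

lemma subF1_div: "t \<in> subF (2^m) 1 \<Longrightarrow> s \<in> subF (2^m) 1 \<Longrightarrow> (t / s :: 'a) \<in> subF (2^m) 1"
  by (simp add: subF_def power_divide)

lemma subF1_add: "t \<in> subF (2^m) 1 \<Longrightarrow> s \<in> subF (2^m) 1 \<Longrightarrow> (t + s :: 'a) \<in> subF (2^m) 1"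
  using frobq[of t s 1] by (simp add: subF_def)

lemma subF12: "t \<in> subF (2^m) 1 \<Longrightarrow> (t :: 'a) \<in> subF (2^m) 2"
  using subF1_pow[of t 2] by (simp add: subF_def)


lemma nonroot: assumes "(c::'a) \<noteq> 0" shows "\<exists>x. Tr (2^m) n (x * c) \<noteq> 0"
proof (rule ccontr)
  assume "\<not> ?thesis"
  then have all0: "\<And>x. Tr (2^m) n (x * c) = 0" by blast
  define Q where "Q = (2::nat)^m"
  have "(2::nat)^1 \<le> 2^m" by (rule power_increasing[OF m1]) simp
  then have Q2: "Q \<ge> 2" unfolding Q_def by simp
  define p where "p = (\<Sum>i<n. monom (c ^ (Q^i)) (Q^i))"
  have evalp: "poly p x = Tr (2^m) n (x * c)" for x
    unfolding p_def Tr_def Q_def by (simp add: poly_sum poly_monom power_mult_distrib mult.commute)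
  have inj: "Q^i = Q^(n-1) \<longleftrightarrow> i = n - 1" for i
    using Q2 by (simp add: power_inject_exp)
  have "coeff p (Q^(n-1)) = (\<Sum>i<n. if Q^i = Q^(n-1) then c ^ (Q^i) else 0)"
    unfolding p_def coeff_sum coeff_monom by (rule refl)
  also have "\<dots> = (\<Sum>i<n. if i = n - 1 then c ^ (Q^i) else 0)"
    by (rule sum.cong[OF refl]) (simp only: inj)
  also have "\<dots> = c ^ (Q^(n-1))" using n2 by (simp add: sum.delta)
  finally have "coeff p (Q^(n-1)) \<noteq> 0" using assms by simp
  then have pnz: "p \<noteq> 0" by auto
  have "degree p \<le> Q^(n-1)"
    unfolding p_def
  proof (rule degree_sum_le)
    fix i assume "i \<in> {..<n}"
    then have "Q^i \<le> Q^(n-1)" using Q2 by (intro power_increasing) auto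
    then show "degree (monom (c ^ Q ^ i) (Q ^ i)) \<le> Q ^ (n - 1)"
      using degree_monom_le le_trans by blast
  qed simp
  moreover have "card {x. poly p x = 0} \<le> degree p" by (rule card_poly_roots_bound[OF pnz])
  moreover have "{x. poly p x = 0} = UNIV" using evalp all0 by auto
  moreover have "Q^(n-1) < Q^n" using Q2 n2 by (intro power_strict_increasing) auto
  ultimately show False using cardF unfolding Q_def by simp
qed

lemma Tr_surj: assumes "(c::'a) \<noteq> 0" "t \<in> subF (2^m) 1" shows "\<exists>x. Tr (2^m) n (x * c) = t"
proof -
  obtain x0 where x0: "Tr (2^m) n (x0 * c) \<noteq> 0" using nonroot[OF assms(1)] by blast
  define s where "s = Tr (2^m) n (x0 * c)"
  have s1: "s \<in> subF (2^m) 1" unfolding s_def by (rule Tr_in)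
  have "Tr (2^m) n ((t / s * x0) * c) = t / s * s"
    using Tr_scal[OF subF1_div[OF assms(2) s1], of "x0 * c"] by (simp add: s_def mult.assoc)
  also have "\<dots> = t" using x0 s_def by simp
  finally show ?thesis by blast
qed

lemma pow_nm1: "((a::'a) ^ ((2^m)^(n-1))) ^ (2^m) = a"
proof -
  have "(a ^ ((2^m)^(n-1))) ^ (2^m) = a ^ ((2^m)^(n-1) * 2^m)" by (simp add: power_mult)
  also have "((2::nat)^m)^(n-1) * 2^m = (2^m)^n"
  proof -
    have "n = Suc (n-1)" using n2 by simp
    then show ?thesis by (metis power_Suc2)
  qed
  finally show ?thesis using ferm by simp
qed

definition cc :: "'a \<Rightarrow> 'a" where "cc a = a ^ (2^m) + a ^ ((2^m)^(n-1))"

lemma expand: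
  "Tr (2^m) n (((x::'a) + a) ^ (2^m + 1)) = Tr (2^m) n (x ^ (2^m + 1)) + Tr (2^m) n (x * cc a) + Tr (2^m) n (a ^ (2^m + 1))"
proof -
  have "(x + a) ^ (2^m + 1) = (x ^ (2^m) + a ^ (2^m)) * (x + a)"
    using frobq[of x a 1] by simp
  also have "\<dots> = x ^ (2^m + 1) + x ^ (2^m) * a + x * a ^ (2^m) + a ^ (2^m + 1)"
    by (simp add: algebra_simps)
  finally have e: "(x + a) ^ (2^m + 1) = x ^ (2^m + 1) + x ^ (2^m) * a + x * a ^ (2^m) + a ^ (2^m + 1)" .
  have "x ^ (2^m) * a = (x * a ^ ((2^m)^(n-1))) ^ (2^m)"
    using pow_nm1[of a] by (simp add: power_mult_distrib)
  then have t: "Tr (2^m) n (x ^ (2^m) * a) = Tr (2^m) n (x * a ^ ((2^m)^(n-1)))"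
    using Tr_frob by simp
  show ?thesis unfolding e cc_def using t by (simp add: Tr_add distrib_left add.assoc add.left_commute)
qed

lemma cc0: "cc (a::'a) = 0 \<Longrightarrow> a \<in> subF (2^m) 2"
proof -
  assume "cc a = 0"
  then have z: "(cc a) ^ (2^m) = 0" by (simp add: zero_power)
  have "(cc a) ^ (2^m) = (a ^ (2^m)) ^ (2^m) + a"
    unfolding cc_def using frobq[of "a ^ (2^m)" "a ^ ((2^m)^(n-1))" 1] pow_nm1[of a] by simp
  then have "(a ^ (2^m)) ^ (2^m) + a = 0" using z by simp
  then have "(a ^ (2^m)) ^ (2^m) = a" by (simp add: sum0_iff)
  then show ?thesis by (simp add: subF_def power_mult[symmetric] power2_eq_square)
qed

lemma subF2_pow: "(a::'a) \<in> subF (2^m) 2 \<Longrightarrow> a ^ ((2^m)^(2*k)) = a"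
proof (induction k)
  case 0 then show ?case by simp
next
  case (Suc k)
  have e: "((2::nat)^m)^(2*Suc k) = ((2^m)^(2*k)) * ((2^m)^2)"
    by (simp add: power_add[symmetric])
  have "a ^ ((2^m)^(2*Suc k)) = (a ^ ((2^m)^(2*k))) ^ ((2^m)^2)"
    by (subst e) (rule power_mult)
  then show ?case using Suc by (simp add: subF_def)
qed

lemma subF2_cc: "(a::'a) \<in> subF (2^m) 2 \<Longrightarrow> cc a = 0"
proof -
  assume a: "a \<in> subF (2^m) 2"
  obtain j where j: "n = 2*j" using ev by (auto elim!: evenE)
  define k where "k = j - 1"
  have k: "n - 1 = 2*k + 1" using j n2 unfolding k_def by simp
  have "a ^ ((2^m)^(n-1)) = (a ^ ((2^m)^(2*k))) ^ (2^m)"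
    unfolding k by (simp add: power_mult[symmetric] mult.commute)
  then show ?thesis using subF2_pow[OF a] by (simp add: cc_def)
qed

lemma subF2_Tr: "(a::'a) \<in> subF (2^m) 2 \<Longrightarrow> Tr (2^m) n (a ^ (2^m + 1)) = 0"
proof -
  assume a: "a \<in> subF (2^m) 2"
  have "(a ^ (2^m + 1)) ^ (2^m) = (a ^ (2^m)) ^ (2^m) * a ^ (2^m)"
    by (simp add: power_mult_distrib)
  also have "(a ^ (2^m)) ^ (2^m) = a" using a by (simp add: subF_def power_mult[symmetric] power2_eq_square)
  finally have b: "a ^ (2^m + 1) \<in> subF (2^m) 1" by (simp add: subF_def mult.commute)
  have "Tr (2^m) n (a ^ (2^m + 1)) = of_nat n * a ^ (2^m + 1)"
    unfolding Tr_def using subF1_pow[OF b] by simp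
  also have "(of_nat n :: 'a) = 0" using ev two by (auto elim!: evenE)
  finally show ?thesis by simp
qed


lemma lin_add: "is_2lin N M \<Longrightarrow> M ((x::'a) + y) = M x + M y"
  unfolding is_2lin_def by (auto simp: frob2 distrib_left sum.distrib)

lemma key:
  fixes M :: "'a \<Rightarrow> 'a"
  assumes add: "\<And>x y. M (x + y) = M x + M y"
  shows "bij (\<lambda>x. Tr (2^m) n (x ^ (2^m + 1)) + M x) \<longleftrightarrow>
    (\<forall>a. a \<noteq> 0 \<longrightarrow> M a \<in> subF (2^m) 1 \<longrightarrow> a \<in> subF (2^m) 2 \<and> M a \<noteq> 0)"
    (is "bij ?f \<longleftrightarrow> ?P")
proof -
  have fx: "?f (x + a) = ?f x + (Tr (2^m) n (x * cc a) + Tr (2^m) n (a ^ (2^m + 1)) + M a)" for x a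
    unfolding expand add by (simp only: ac_simps)
  show ?thesis
  proof
    assume b: "bij ?f"
    then have inj: "inj ?f" by (simp add: bij_def)
    show ?P
    proof (intro allI impI)
      fix a :: 'a assume a0: "a \<noteq> 0" and Ma: "M a \<in> subF (2^m) 1"
      have c0: "cc a = 0"
      proof (rule ccontr)
        assume "cc a \<noteq> 0"
        define t where "t = M a + Tr (2^m) n (a ^ (2^m + 1))"
        have "t \<in> subF (2^m) 1" unfolding t_def by (intro subF1_add Ma Tr_in)
        then obtain x where x: "Tr (2^m) n (x * cc a) = t" using Tr_surj \<open>cc a \<noteq> 0\<close> by blast
        have "?f (x + a) = ?f x + (t + t)" using fx[of x a] x by (simp only: t_def ac_simps)
        then have "?f (x + a) = ?f x" by (simp only: plus_self add_0_right)
        then have "x + a = x" by (rule injD[OF inj])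
        then show False using a0 by simp
      qed
      then have a2: "a \<in> subF (2^m) 2" by (rule cc0)
      have "M a \<noteq> 0"
      proof
        assume "M a = 0"
        then have "?f (0 + a) = ?f 0" using fx[of 0 a] subF2_Tr[OF a2] by simp
        then have "0 + a = 0" by (rule injD[OF inj])
        then show False using a0 by simp
      qed
      then show "a \<in> subF (2^m) 2 \<and> M a \<noteq> 0" using a2 by simp
    qed
  next
    assume P: ?P
    have "inj ?f"
    proof (rule injI)
      fix x y assume e: "?f x = ?f y"
      show "x = y"
      proof (rule ccontr)
        assume "x \<noteq> y"
        define a where "a = x + y"
        have a0: "a \<noteq> 0" using \<open>x \<noteq> y\<close> by (simp add: a_def sum0_iff)
        have "y = x + a" by (simp add: a_def add.assoc[symmetric])
        then have "?f x = ?f x + (Tr (2^m) n (x * cc a) + Tr (2^m) n (a ^ (2^m + 1)) + M a)"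
          using e fx[of x a] by simp
        then have s: "Tr (2^m) n (x * cc a) + Tr (2^m) n (a ^ (2^m + 1)) + M a = 0" by simp
        then have "M a = Tr (2^m) n (x * cc a) + Tr (2^m) n (a ^ (2^m + 1))"
          using sum0_iff[of "Tr (2^m) n (x * cc a) + Tr (2^m) n (a ^ (2^m + 1))" "M a"] by simp
        then have "M a \<in> subF (2^m) 1" by (simp only: subF1_add Tr_in)
        then have a2: "a \<in> subF (2^m) 2" and "M a \<noteq> 0" using P a0 by blast+
        moreover have "M a = 0" using s subF2_cc[OF a2] subF2_Tr[OF a2] by simp
        ultimately show False by simp
      qed
    qed
    then show "bij ?f" by (simp add: bij_def finite_UNIV_inj_surj)
  qed
qed

end

theorem mainTheorem14:
  fixes m n :: nat and L lam :: "'a::{field,finite} \<Rightarrow> 'a"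
  assumes "m \<ge> 1"
    and "even n"
    and "card (UNIV :: 'a set) = (2 ^ m) ^ n"
    and "is_2lin (m * n) L"
    and "bij (\<lambda>x. Tr (2 ^ m) n (x ^ (2 ^ m + 1)) + L x)"
    and "is_2lin (m * n) lam"
    and "bij lam"
  shows "(lam ` subF (2 ^ m) 2 = subF (2 ^ m) 2 \<longrightarrow>
            bij (\<lambda>x. Tr (2 ^ m) n (x ^ (2 ^ m + 1)) + lam x) \<and>
            bij (\<lambda>x. Tr (2 ^ m) n (x ^ (2 ^ m + 1)) + L (lam x)))
       \<and> (lam ` subF (2 ^ m) 1 = subF (2 ^ m) 1 \<longrightarrow>
            bij (\<lambda>x. Tr (2 ^ m) n (x ^ (2 ^ m + 1)) + lam (L x)))"
proof -
  have two: "(2::'a) = 0" using char2[of "m*n"] assms(3) by (simp add: power_mult)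
  note K = key[OF two assms(3) assms(2) assms(1)]
  have Ladd: "\<And>x y. L (x + y) = L x + L y" using lin_add[OF two assms(3) assms(2) assms(1) assms(4)] .
  have ladd: "\<And>x y. lam (x + y) = lam x + lam y" using lin_add[OF two assms(3) assms(2) assms(1) assms(6)] .
  have linj: "inj lam" using assms(7) by (simp add: bij_def)
  have l0: "lam 0 = 0" using ladd[of 0 0] by (metis add_cancel_right_right add_0_right)
  have lnz: "lam a \<noteq> 0" if "a \<noteq> 0" for a using linj that l0 by (metis injD)
  have PL: "\<forall>a. a \<noteq> 0 \<longrightarrow> L a \<in> subF (2^m) 1 \<longrightarrow> a \<in> subF (2^m) 2 \<and> L a \<noteq> 0"
    by (rule K[of L, OF Ladd, THEN iffD1, OF assms(5)])
  have sub12: "\<And>t. t \<in> subF (2^m) 1 \<Longrightarrow> (t::'a) \<in> subF (2^m) 2"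
    using subF12[OF two assms(3) assms(2) assms(1)] .
  show ?thesis
  proof (intro conjI impI)
    assume im: "lam ` subF (2 ^ m) 2 = subF (2 ^ m) 2"
    have bk: "a \<in> subF (2^m) 2" if "lam a \<in> subF (2^m) 2" for a
    proof -
      have "lam a \<in> lam ` subF (2^m) 2" unfolding im by (rule that)
      then show ?thesis by (simp only: inj_image_mem_iff[OF linj])
    qed
    show "bij (\<lambda>x. Tr (2 ^ m) n (x ^ (2 ^ m + 1)) + lam x)"
    proof (rule K[of lam, OF ladd, THEN iffD2], intro allI impI)
      fix a assume a: "a \<noteq> 0" "lam a \<in> subF (2^m) 1"
      show "a \<in> subF (2^m) 2 \<and> lam a \<noteq> 0"
        using bk[OF sub12[OF a(2)]] lnz[OF a(1)] by simp
    qed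
    show "bij (\<lambda>x. Tr (2 ^ m) n (x ^ (2 ^ m + 1)) + L (lam x))"
    proof (rule K[of "\<lambda>x. L (lam x)", THEN iffD2], simp only: ladd Ladd, intro allI impI)
      fix a assume a: "a \<noteq> 0" "L (lam a) \<in> subF (2^m) 1"
      have "lam a \<in> subF (2^m) 2 \<and> L (lam a) \<noteq> 0"
        using PL lnz[OF a(1)] a(2) by simp
      then show "a \<in> subF (2^m) 2 \<and> L (lam a) \<noteq> 0" using bk by simp
    qed
  next
    assume im: "lam ` subF (2 ^ m) 1 = subF (2 ^ m) 1"
    have bk: "a \<in> subF (2^m) 1" if "lam a \<in> subF (2^m) 1" for a
    proof -
      have "lam a \<in> lam ` subF (2^m) 1" unfolding im by (rule that)
      then show ?thesis by (simp only: inj_image_mem_iff[OF linj])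
    qed
    show "bij (\<lambda>x. Tr (2 ^ m) n (x ^ (2 ^ m + 1)) + lam (L x))"
    proof (rule K[of "\<lambda>x. lam (L x)", THEN iffD2], simp only: ladd Ladd, intro allI impI)
      fix a assume a: "a \<noteq> 0" "lam (L a) \<in> subF (2^m) 1"
      have La: "L a \<in> subF (2^m) 1" using bk[OF a(2)] .
      then have "a \<in> subF (2^m) 2 \<and> L a \<noteq> 0" using PL a(1) by simp
      then show "a \<in> subF (2^m) 2 \<and> lam (L a) \<noteq> 0" using lnz by simp
    qed
  qed
qed

end
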